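(* Let $\alpha\in(0,1)$, and let $\mathcal E=(N,\{a_1,a_2\},\vec\sigma)$ be an election with two alternatives. Partition $N$ into four sets according to the agents' preferences: $N_1$ ($a_1\succ a_2$), $N_2$ ($a_2\succ a_1$), $N_3$ ($a_1\succ\!\!\succ a_2$) and $N_4$ ($a_2\succ\!\!\succ a_1$). Define two placements on the real line, each with distance $d(x,y)=|x-y|$. - Placement $d_1$: $a_1$ at $0$; $N_3$ at $2$; $N_1$ at $\frac1\alpha+1$; $N_2$ at $\frac2\alpha$; $a_2$ and $N_4$ at $\frac2\alpha+2$. - Placement $d_2$: $a_1$ at $0$; $N_3$ at $2$; $N_1$ at $\frac1\alpha+1$; $a_2$ and $N_4$ at $\frac2\alpha+2$; $N_2$ at $\frac2\alpha+2+\frac{2\alpha+2}{1-\alpha}$. Then, for the distortion restricted to 1-Euclidean metrics, $$\mathsf{dist}_\alpha(a_1,\mathcal E)=\max\left(\frac{\mathrm{sc}_{d_1}(a_1)}{\mathrm{sc}_{d_1}(a_2)},\ \frac{\mathrm{sc}_{d_2}(a_1)}{\mathrm{sc}_{d_2}(a_2)},\ 1\right).$$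
   Context: Each agent $i$ reports $\sigma_i=(\pi_i,\Join_i)$, a ranking of the two alternatives together with $\Join_i(1)\in\{\succ,\succ\!\!\succ\}$. The profile is $\alpha$-consistent with $d$ (mandatory elicitation) if: - whenever agent $i$ reports $x\succ y$, we have $d(i,y)\ge d(i,x)>\alpha d(i,y)$; - whenever agent $i$ reports $x\succ\!\!\succ y$, we have $d(i,x)\le\alpha d(i,y)$. Here $\mathrm{sc}_d(a)=\sum_{i\in N}d(i,a)$. The 1-Euclidean distortion is $\mathsf{dist}_\alpha(a,\mathcal E)=\sup_d \mathrm{sc}_d(a)/\min_b\mathrm{sc}_d(b)$, where the supremum ranges over metrics $d(x,y)=|x-y|$ induced by placing all agents and alternatives on $\mathbb R$ with which the profile is $\alpha$-consistent. A ratio with zero denominator and positive numerator is read as $+\infty$. *)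

theory Defs
  imports Complex_Main "HOL-Library.Extended_Real"
begin

datatype alt = A1 | A2

fun other :: "alt \<Rightarrow> alt" where
  "other A1 = A2" | "other A2 = A1"

datatype strength = Weak | Strong

text \<open>A report: the top-ranked alternative together with the strength of the
  comparison (Weak = succ, Strong = succ-succ).\<close>
type_synonym report = "alt \<times> strength"

definition edist :: "('i \<Rightarrow> real) \<Rightarrow> (alt \<Rightarrow> real) \<Rightarrow> 'i \<Rightarrow> alt \<Rightarrow> real" where
  "edist q p i a = \<bar>q i - p a\<bar>"

definition consistent ::
  "real \<Rightarrow> 'i set \<Rightarrow> ('i \<Rightarrow> report) \<Rightarrow> ('i \<Rightarrow> real) \<Rightarrow> (alt \<Rightarrow> real) \<Rightarrow> bool" where
  "consistent \<alpha> N \<sigma> q p \<longleftrightarrow>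
     (\<forall>i\<in>N. let x = fst (\<sigma> i); y = other x in
        (snd (\<sigma> i) = Weak \<longrightarrow>
           edist q p i y \<ge> edist q p i x \<and> edist q p i x > \<alpha> * edist q p i y) \<and>
        (snd (\<sigma> i) = Strong \<longrightarrow> edist q p i x \<le> \<alpha> * edist q p i y))"

definition sc :: "'i set \<Rightarrow> ('i \<Rightarrow> real) \<Rightarrow> (alt \<Rightarrow> real) \<Rightarrow> alt \<Rightarrow> real" where
  "sc N q p a = (\<Sum>i\<in>N. edist q p i a)"

text \<open>Ratio in the extended reals: positive / 0 = +infinity; 0/0 read as 1.\<close>
definition ratio :: "real \<Rightarrow> real \<Rightarrow> ereal" where
  "ratio x y = (if y = 0 then (if x > 0 then \<infinity> else 1) else ereal (x / y))"

definition distortion :: "real \<Rightarrow> 'i set \<Rightarrow> ('i \<Rightarrow> report) \<Rightarrow> alt \<Rightarrow> ereal" where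
  "distortion \<alpha> N \<sigma> a =
     (SUP qp \<in> {(q, p). consistent \<alpha> N \<sigma> q p}.
        ratio (sc N (fst qp) (snd qp) a) (min (sc N (fst qp) (snd qp) A1) (sc N (fst qp) (snd qp) A2)))"

definition altpos1 :: "real \<Rightarrow> alt \<Rightarrow> real" where
  "altpos1 \<alpha> a = (case a of A1 \<Rightarrow> 0 | A2 \<Rightarrow> 2/\<alpha> + 2)"

definition agpos1 :: "real \<Rightarrow> ('i \<Rightarrow> report) \<Rightarrow> 'i \<Rightarrow> real" where
  "agpos1 \<alpha> \<sigma> i = (case \<sigma> i of
       (A1, Weak) \<Rightarrow> 1/\<alpha> + 1
     | (A2, Weak) \<Rightarrow> 2/\<alpha>
     | (A1, Strong) \<Rightarrow> 2
     | (A2, Strong) \<Rightarrow> 2/\<alpha> + 2)"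

definition altpos2 :: "real \<Rightarrow> alt \<Rightarrow> real" where
  "altpos2 \<alpha> a = (case a of A1 \<Rightarrow> 0 | A2 \<Rightarrow> 2/\<alpha> + 2)"

definition agpos2 :: "real \<Rightarrow> ('i \<Rightarrow> report) \<Rightarrow> 'i \<Rightarrow> real" where
  "agpos2 \<alpha> \<sigma> i = (case \<sigma> i of
       (A1, Weak) \<Rightarrow> 1/\<alpha> + 1
     | (A2, Weak) \<Rightarrow> 2/\<alpha> + 2 + (2*\<alpha> + 2) / (1 - \<alpha>)
     | (A1, Strong) \<Rightarrow> 2
     | (A2, Strong) \<Rightarrow> 2/\<alpha> + 2)"

end

theory Submission
  imports Defs
begin

lemma geom: fixes q a b :: real
  shows "\<bar>a-b\<bar> = \<bar>q-a\<bar>+\<bar>q-b\<bar> \<or> \<bar>a-b\<bar> = \<bar>q-a\<bar>-\<bar>q-b\<bar> \<or> \<bar>a-b\<bar> = \<bar>q-b\<bar>-\<bar>q-a\<bar>"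
  by linarith

lemma n2a: fixes u v L al la :: real
  assumes "0<al" "al<1" "1 \<le> la" "la*al \<ge> 1" "u \<ge> v" "v > al*u" "v \<ge> 0"
   "L = u+v \<or> L = u-v \<or> L = v-u" "L \<ge> 0"
  shows "(u - la*v)*(1+al) \<le> L * (1-la*al)"
proof -
  have "L = u+v \<or> L = u-v" using assms by linarith
  then consider "L = u+v" | "L = u - v" by blast
  then show ?thesis
  proof cases
    case 1 
    have h: "al*u*(1+la) \<le> v*(1+la)" using assms by (intro mult_right_mono) auto
    show ?thesis unfolding 1 using h by (simp add: algebra_simps)
  next
    case 2
    have h: "(la-1)*(al*u-v) \<le> 0" using assms by (intro mult_nonneg_nonpos) auto
    have c: "(u-v)*(1-la*al) \<le> 0" using assms by (intro mult_nonneg_nonpos) auto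
    have h1: "(u - la*v)*(1-al) \<le> (u-v)*(1-la*al)" using h by (simp add: algebra_simps)
    have X: "u - la*v \<le> 0" using h1 c assms by (smt (verit) mult_pos_pos)
    have "(u - la*v)*(1+al) \<le> (u - la*v)*(1-al)" using X assms by (intro mult_left_mono_neg) auto
    then show ?thesis unfolding 2 using h1 c by linarith
  qed
qed

lemma n2b: fixes u v L al la :: real
  assumes "0<al" "al<1" "1 \<le> la" "la*al \<le> 1" "u \<ge> v" "v > al*u" "v \<ge> 0"
   "L = u+v \<or> L = u-v \<or> L = v-u" "L \<ge> 0"
  shows "(u - la*v)*(1-al) \<le> L * (1-la*al)"
proof -
  have "L = u+v \<or> L = u-v" using assms by linarith
  then consider "L = u+v" | "L = u - v" by blast
  then show ?thesis
  proof cases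
    case 1 
    have h: "al*u*(1+la) \<le> v*(1+la)" using assms by (intro mult_right_mono) auto
    have c: "(u+v)*(1-la*al) \<ge> 0" using assms by (intro mult_nonneg_nonneg) auto
    have h1: "(u - la*v)*(1+al) \<le> (u+v)*(1-la*al)" using h by (simp add: algebra_simps)
    show ?thesis
    proof (cases "u - la*v \<ge> 0")
      case True
      have "(u - la*v)*(1-al) \<le> (u - la*v)*(1+al)" using True assms by (intro mult_left_mono) auto
      then show ?thesis unfolding 1 using h1 by linarith
    next
      case False
      have "(u - la*v)*(1-al) \<le> 0" using False assms by (intro mult_nonpos_nonneg) auto
      then show ?thesis unfolding 1 using c by linarith
    qed
  next
    case 2
    have h: "(la-1)*(al*u-v) \<le> 0" using assms by (intro mult_nonneg_nonpos) auto
    show ?thesis unfolding 2 using h by (simp add: algebra_simps)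
  qed
qed

lemma n1: fixes u v L al la :: real
  assumes "0<al" "al<1" "1 \<le> la" "v \<ge> u" "u > al*v" "u \<ge> 0"
   "L = u+v \<or> L = u-v \<or> L = v-u" "L \<ge> 0"
  shows "(u - la*v)*2 \<le> L * (1-la)"
proof -
  have "L = u+v \<or> L = v-u" using assms by linarith
  then consider "L = u+v" | "L = v - u" by blast
  then show ?thesis
  proof cases
    case 1 
    have h: "u*(1+la) \<le> v*(1+la)" using assms by (intro mult_right_mono) auto
    show ?thesis unfolding 1 using h by (simp add: algebra_simps)
  next
    case 2
    have h: "(la-1)*(v-u) \<ge> 0" using assms by (intro mult_nonneg_nonneg) auto
    have h3: "u \<le> la*u" "v \<le> la*v" using assms by (auto simp: mult_le_cancel_right1)
    show ?thesis unfolding 2 using h h3 assms by (simp add: algebra_simps)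
  qed
qed

lemma n3: fixes u v L al la :: real
  assumes "0<al" "al<1" "1 \<le> la" "u \<le> al*v" "u \<ge> 0" "v \<ge> 0"
   "L = u+v \<or> L = u-v \<or> L = v-u" "L \<ge> 0"
  shows "(u - la*v)*(1+al) \<le> L * (al-la)"
proof -
  have "al*v \<le> v" using assms by (intro mult_left_le_one_le) auto
  then have "L = u+v \<or> L = v-u" using assms by linarith
  then consider "L = u+v" | "L = v - u" by blast
  then show ?thesis
  proof cases
    case 1 
    have h: "u*(1+la) \<le> al*v*(1+la)" using assms by (intro mult_right_mono) auto
    show ?thesis unfolding 1 using h by (simp add: algebra_simps)
  next
    case 2
    have h: "(la-al)*(v-u) \<ge> 0" using assms \<open>al*v \<le> v\<close> by (intro mult_nonneg_nonneg) auto
    have h2: "u*(1+la) \<le> al*v*(1+la)" using assms by (intro mult_right_mono) auto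
    have h3: "u*al \<le> u*la" using assms by (intro mult_left_mono) auto
    show ?thesis unfolding 2 using h h2 h3 by (simp add: algebra_simps)
  qed
qed

lemma n4: fixes u v L al la :: real
  assumes "0<al" "al<1" "1 \<le> la" "v \<ge> 0"
   "L = u+v \<or> L = u-v \<or> L = v-u" "L \<ge> 0"
  shows "u - la*v \<le> L"
proof -
  have "v \<le> la * v" using assms by (simp add: mult_le_cancel_right1)
  then show ?thesis using assms by auto
qed

lemma scale: fixes X c L e m k D :: real
  assumes "X*c \<le> L*e" "m = k*e" "D = k*c" "k > 0"
  shows "D*X \<le> L*m"
proof -
  have "D*X = k*(X*c)" using assms by simp
  also have "\<dots> \<le> k*(L*e)" using assms by (intro mult_left_mono) auto
  also have "\<dots> = L*m" using assms by simp
  finally show ?thesis .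
qed

definition cond :: "real \<Rightarrow> report \<Rightarrow> real \<Rightarrow> real \<Rightarrow> bool" where
  "cond al r u v = (case r of (A1,Weak) \<Rightarrow> v \<ge> u \<and> u > al*v | (A1,Strong) \<Rightarrow> u \<le> al*v
     | (A2,Weak) \<Rightarrow> u \<ge> v \<and> v > al*u | (A2,Strong) \<Rightarrow> v \<le> al*u)"

lemma consistent_cond: "consistent al N \<sigma> q p \<Longrightarrow> i \<in> N \<Longrightarrow> cond al (\<sigma> i) (edist q p i A1) (edist q p i A2)"
  unfolding consistent_def cond_def
  apply (drule bspec, assumption)
  apply (cases "\<sigma> i")
  subgoal for x s by (cases x; cases s; simp add: Let_def)
  done

lemma cond_consistent: "(\<And>i. i \<in> N \<Longrightarrow> cond al (\<sigma> i) (edist q p i A1) (edist q p i A2)) \<Longrightarrow> consistent al N \<sigma> q p"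
  unfolding consistent_def cond_def
  apply (intro ballI)
  subgoal for i
  apply (drule meta_spec[of _ i], drule meta_mp, assumption)
  apply (cases "\<sigma> i")
  subgoal for x s by (cases x; cases s; simp add: Let_def)
  done
  done

definition posr1 :: "real \<Rightarrow> report \<Rightarrow> real" where
  "posr1 al r = (case r of (A1, Weak) \<Rightarrow> 1/al + 1 | (A2, Weak) \<Rightarrow> 2/al
     | (A1, Strong) \<Rightarrow> 2 | (A2, Strong) \<Rightarrow> 2/al + 2)"
definition posr2 :: "real \<Rightarrow> report \<Rightarrow> real" where
  "posr2 al r = (case r of (A1, Weak) \<Rightarrow> 1/al + 1 | (A2, Weak) \<Rightarrow> 2/al + 2 + (2*al + 2) / (1 - al)
     | (A1, Strong) \<Rightarrow> 2 | (A2, Strong) \<Rightarrow> 2/al + 2)"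

lemma agpos1_eq: "agpos1 al \<sigma> i = posr1 al (\<sigma> i)" by (simp add: agpos1_def posr1_def)
lemma agpos2_eq: "agpos2 al \<sigma> i = posr2 al (\<sigma> i)" by (simp add: agpos2_def posr2_def)

lemma posr1_simps: "posr1 al (A1,Weak) = 1/al+1" "posr1 al (A1,Strong) = 2" "posr1 al (A2,Weak) = 2/al"
  "posr1 al (A2,Strong) = 2/al+2" by (simp_all add: posr1_def)
lemma posr2_simps: "posr2 al (A1,Weak) = 1/al+1" "posr2 al (A1,Strong) = 2" "posr2 al (A2,Weak) = 2/al + 2 + (2*al + 2) / (1 - al)"
  "posr2 al (A2,Strong) = 2/al+2" by (simp_all add: posr2_def)

lemma agent1:
  fixes al la x a b :: real
  assumes "0<al" "al<1" "1 \<le> la" "la*al \<ge> 1" "cond al r \<bar>x-a\<bar> \<bar>x-b\<bar>"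
  shows "(2/al+2) * (\<bar>x-a\<bar> - la*\<bar>x-b\<bar>) \<le> \<bar>a-b\<bar> * (\<bar>posr1 al r - 0\<bar> - la * \<bar>posr1 al r - (2/al+2)\<bar>)"
proof -
  have g: "\<bar>a-b\<bar> = \<bar>x-a\<bar>+\<bar>x-b\<bar> \<or> \<bar>a-b\<bar> = \<bar>x-a\<bar>-\<bar>x-b\<bar> \<or> \<bar>a-b\<bar> = \<bar>x-b\<bar>-\<bar>x-a\<bar>" by linarith
  have ia: "1/al > 1" "2/al = 2*(1/al)" using assms by simp_all
  have ab: "\<bar>1/al+1 - 0\<bar> = 1/al+1" "\<bar>1/al+1 - (2/al+2)\<bar> = 1/al+1"
    "\<bar>2 - 0\<bar> = (2::real)" "\<bar>2 - (2/al+2)\<bar> = 2/al"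
    "\<bar>2/al - 0\<bar> = 2/al" "\<bar>2/al - (2/al+2)\<bar> = 2"
    "\<bar>2/al+2 - 0\<bar> = 2/al+2" "\<bar>2/al+2 - (2/al+2)\<bar> = 0"
    using ia by (smt (verit))+
  have nz: "al \<noteq> 0" using assms by simp
  have Dp: "2/al + 2 > 0" using assms by (smt (verit) divide_pos_pos)
  obtain y s where r: "r = (y,s)" by fastforce
  show ?thesis
  proof (cases y; cases s)
    assume c: "y = A1" "s = Weak"
    have *: "(\<bar>x-a\<bar> - la*\<bar>x-b\<bar>)*2 \<le> \<bar>a-b\<bar> * (1-la)"
      using assms g by (intro n1) (auto simp: cond_def r c)
    show ?thesis unfolding r c posr1_simps ab
      by (rule scale[OF *, where k="1/al+1"]) (use ia nz in \<open>simp_all add: algebra_simps add_divide_distrib[symmetric]\<close>)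
  next
    assume c: "y = A1" "s = Strong"
    have *: "(\<bar>x-a\<bar> - la*\<bar>x-b\<bar>)*(1+al) \<le> \<bar>a-b\<bar> * (al-la)"
      using assms g by (intro n3) (auto simp: cond_def r c)
    show ?thesis unfolding r c posr1_simps ab
      by (rule scale[OF *, where k="2/al"]) (use assms nz in \<open>simp_all add: field_simps\<close>)
  next
    assume c: "y = A2" "s = Weak"
    have *: "(\<bar>x-a\<bar> - la*\<bar>x-b\<bar>)*(1+al) \<le> \<bar>a-b\<bar> * (1-la*al)"
      using assms g by (intro n2a) (auto simp: cond_def r c)
    show ?thesis unfolding r c posr1_simps ab
      by (rule scale[OF *, where k="2/al"]) (use assms nz in \<open>simp_all add: field_simps\<close>)
  next
    assume c: "y = A2" "s = Strong"
    have *: "(\<bar>x-a\<bar> - la*\<bar>x-b\<bar>)*1 \<le> \<bar>a-b\<bar> * 1"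
      using assms g by (simp, intro n4) (auto simp: cond_def r c)
    show ?thesis unfolding r c posr1_simps ab
      by (rule scale[OF *, where k="2/al+2"]) (use assms Dp in \<open>simp_all\<close>)
  qed
qed

lemma agent2:
  fixes al la x a b :: real
  assumes "0<al" "al<1" "1 \<le> la" "la*al \<le> 1" "cond al r \<bar>x-a\<bar> \<bar>x-b\<bar>"
  shows "(2/al+2) * (\<bar>x-a\<bar> - la*\<bar>x-b\<bar>) \<le> \<bar>a-b\<bar> * (\<bar>posr2 al r - 0\<bar> - la * \<bar>posr2 al r - (2/al+2)\<bar>)"
proof -
  have g: "\<bar>a-b\<bar> = \<bar>x-a\<bar>+\<bar>x-b\<bar> \<or> \<bar>a-b\<bar> = \<bar>x-a\<bar>-\<bar>x-b\<bar> \<or> \<bar>a-b\<bar> = \<bar>x-b\<bar>-\<bar>x-a\<bar>" by linarith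
  have ia: "1/al > 1" "2/al = 2*(1/al)" using assms by simp_all
  have ab: "\<bar>1/al+1 - 0\<bar> = 1/al+1" "\<bar>1/al+1 - (2/al+2)\<bar> = 1/al+1"
    "\<bar>2 - 0\<bar> = (2::real)" "\<bar>2 - (2/al+2)\<bar> = 2/al"
    "\<bar>2/al - 0\<bar> = 2/al" "\<bar>2/al - (2/al+2)\<bar> = 2"
    "\<bar>2/al+2 - 0\<bar> = 2/al+2" "\<bar>2/al+2 - (2/al+2)\<bar> = 0"
    using ia by (smt (verit))+
  have nz: "al \<noteq> 0" "1 - al \<noteq> 0" using assms by simp_all
  have sp: "(2*al+2)/(1-al) > 0" using assms by (intro divide_pos_pos) auto
  have ab2: "\<bar>2/al + 2 + (2*al + 2) / (1 - al) - 0\<bar> = 2/al + 2 + (2*al + 2) / (1 - al)"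
     "\<bar>2/al + 2 + (2*al + 2) / (1 - al) - (2/al+2)\<bar> = (2*al + 2) / (1 - al)"
    using sp ia by (smt (verit))+
  have Dp: "2/al + 2 > 0" using assms by (smt (verit) divide_pos_pos)
  obtain y s where r: "r = (y,s)" by fastforce
  show ?thesis
  proof (cases y; cases s)
    assume c: "y = A1" "s = Weak"
    have *: "(\<bar>x-a\<bar> - la*\<bar>x-b\<bar>)*2 \<le> \<bar>a-b\<bar> * (1-la)"
      using assms g by (intro n1) (auto simp: cond_def r c)
    show ?thesis unfolding r c posr2_simps ab
      by (rule scale[OF *, where k="1/al+1"]) (use ia nz in \<open>simp_all add: algebra_simps add_divide_distrib[symmetric]\<close>)
  next
    assume c: "y = A1" "s = Strong"
    have *: "(\<bar>x-a\<bar> - la*\<bar>x-b\<bar>)*(1+al) \<le> \<bar>a-b\<bar> * (al-la)"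
      using assms g by (intro n3) (auto simp: cond_def r c)
    show ?thesis unfolding r c posr2_simps ab
      by (rule scale[OF *, where k="2/al"]) (use assms nz in \<open>simp_all add: field_simps\<close>)
  next
    assume c: "y = A2" "s = Weak"
    have *: "(\<bar>x-a\<bar> - la*\<bar>x-b\<bar>)*(1-al) \<le> \<bar>a-b\<bar> * (1-la*al)"
      using assms g by (intro n2b) (auto simp: cond_def r c)
    have e1: "2/al + 2 + (2*al+2)/(1-al) = (2/al+2)/(1-al)" using nz by (simp add: field_simps)
    have e2: "(2*al+2)/(1-al) = ((2/al+2)/(1-al))*al" using nz by (simp add: field_simps)
    have e3: "2/al+2 = ((2/al+2)/(1-al))*(1-al)" using nz by simp
    have kp: "(2/al+2)/(1-al) > 0" using Dp assms by simp
    show ?thesis unfolding r c posr2_simps ab2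
      apply (rule scale[OF *, where k="(2/al+2)/(1-al)"])
      subgoal
      proof -
        have gen: "\<And>K::real. K - la*(K*al) = K*(1-la*al)" by (simp add: algebra_simps)
        show ?thesis by (subst e1, subst e2, rule gen)
      qed
      subgoal by (rule e3)
      subgoal by (rule kp)
      done
  next
    assume c: "y = A2" "s = Strong"
    have *: "(\<bar>x-a\<bar> - la*\<bar>x-b\<bar>)*1 \<le> \<bar>a-b\<bar> * 1"
      using assms g by (simp, intro n4) (auto simp: cond_def r c)
    show ?thesis unfolding r c posr2_simps ab
      by (rule scale[OF *, where k="2/al+2"]) (use assms Dp in \<open>simp_all\<close>)
  qed
qed


lemma altpos_simps: "altpos1 al A1 = 0" "altpos1 al A2 = 2/al+2" "altpos2 al A1 = 0" "altpos2 al A2 = 2/al+2"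
  by (simp_all add: altpos1_def altpos2_def)

lemma sc1_eq: "sc N (agpos1 al \<sigma>) (altpos1 al) A1 = (\<Sum>i\<in>N. \<bar>posr1 al (\<sigma> i) - 0\<bar>)"
  "sc N (agpos1 al \<sigma>) (altpos1 al) A2 = (\<Sum>i\<in>N. \<bar>posr1 al (\<sigma> i) - (2/al+2)\<bar>)"
  "sc N (agpos2 al \<sigma>) (altpos2 al) A1 = (\<Sum>i\<in>N. \<bar>posr2 al (\<sigma> i) - 0\<bar>)"
  "sc N (agpos2 al \<sigma>) (altpos2 al) A2 = (\<Sum>i\<in>N. \<bar>posr2 al (\<sigma> i) - (2/al+2)\<bar>)"
  unfolding sc_def edist_def agpos1_eq agpos2_eq altpos_simps by simp_all

lemma upper_key:
  fixes al la :: real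
  assumes "0<al" "al<1" "1 \<le> la" "consistent al N \<sigma> q p"
    "la*al \<ge> 1 \<Longrightarrow> sc N (agpos1 al \<sigma>) (altpos1 al) A1 \<le> la * sc N (agpos1 al \<sigma>) (altpos1 al) A2"
    "la*al \<le> 1 \<Longrightarrow> sc N (agpos2 al \<sigma>) (altpos2 al) A1 \<le> la * sc N (agpos2 al \<sigma>) (altpos2 al) A2"
  shows "sc N q p A1 \<le> la * sc N q p A2"
proof -
  define L where "L = \<bar>p A1 - p A2\<bar>"
  have L0: "L \<ge> 0" unfolding L_def by simp
  have Dp: "2/al + 2 > 0" using assms by (smt (verit) divide_pos_pos)
  have lhs: "(\<Sum>i\<in>N. (2/al+2) * (\<bar>q i - p A1\<bar> - la*\<bar>q i - p A2\<bar>)) = (2/al+2) * (sc N q p A1 - la * sc N q p A2)"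
    unfolding sc_def edist_def by (simp add: sum_distrib_left sum_subtractf right_diff_distrib)
  have "(2/al+2) * (sc N q p A1 - la * sc N q p A2) \<le> 0"
  proof (cases "la*al \<ge> 1")
    case True
    have "(\<Sum>i\<in>N. (2/al+2) * (\<bar>q i - p A1\<bar> - la*\<bar>q i - p A2\<bar>)) \<le>
          (\<Sum>i\<in>N. L * (\<bar>posr1 al (\<sigma> i) - 0\<bar> - la * \<bar>posr1 al (\<sigma> i) - (2/al+2)\<bar>))"
      unfolding L_def
      by (rule sum_mono, rule agent1) (use assms True consistent_cond[OF assms(4)] in \<open>auto simp: edist_def\<close>)
    also have "\<dots> = L * (sc N (agpos1 al \<sigma>) (altpos1 al) A1 - la * sc N (agpos1 al \<sigma>) (altpos1 al) A2)"
      unfolding sc1_eq by (simp add: sum_distrib_left sum_subtractf right_diff_distrib)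
    also have "\<dots> \<le> 0" using assms(5)[OF True] L0 by (intro mult_nonneg_nonpos) auto
    finally show ?thesis using lhs by simp
  next
    case False
    have "(\<Sum>i\<in>N. (2/al+2) * (\<bar>q i - p A1\<bar> - la*\<bar>q i - p A2\<bar>)) \<le>
          (\<Sum>i\<in>N. L * (\<bar>posr2 al (\<sigma> i) - 0\<bar> - la * \<bar>posr2 al (\<sigma> i) - (2/al+2)\<bar>))"
      unfolding L_def
      by (rule sum_mono, rule agent2) (use assms False consistent_cond[OF assms(4)] in \<open>auto simp: edist_def\<close>)
    also have "\<dots> = L * (sc N (agpos2 al \<sigma>) (altpos2 al) A1 - la * sc N (agpos2 al \<sigma>) (altpos2 al) A2)"
      unfolding sc1_eq by (simp add: sum_distrib_left sum_subtractf right_diff_distrib)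
    also have "\<dots> \<le> 0" using assms(6) False L0 by (intro mult_nonneg_nonpos) auto
    finally show ?thesis using lhs by simp
  qed
  then show ?thesis using Dp by (simp add: mult_le_0_iff)
qed


lemma ratio_le: fixes x y la :: real
  assumes "0 \<le> x" "0 \<le> y" "1 \<le> la" "x \<le> la*y"
  shows "ratio x (min x y) \<le> ereal la"
proof (cases "x \<le> y")
  case True
  then show ?thesis using assms by (auto simp: ratio_def min_def)
next
  case False
  then have "y > 0" using assms by (smt (verit) mult_nonneg_nonpos)
  then show ?thesis using assms False by (auto simp: ratio_def min_def pos_divide_le_eq)
qed

lemma posr_pos: "0 < al \<Longrightarrow> al < 1 \<Longrightarrow> posr1 al r > 0 \<and> posr2 al r > 0"
proof -
  assume a: "0 < al" "al < 1"
  have b: "2/al > 0" "1/al > 0" "(2*al+2)/(1-al) > 0" using a by (auto intro!: divide_pos_pos)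
  have f: "1/al+1 > 0" "2/al > 0" "2 > (0::real)" "2/al+2 > 0" "2/al+2+(2*al+2)/(1-al) > 0"
    using b by linarith+
  obtain y s where r: "r = (y,s)" by fastforce
  show ?thesis unfolding r by (cases y; cases s; simp only: posr1_simps posr2_simps f simp_thms)
qed

lemma P_pos: assumes "0 < al" "al < 1" "finite N" "N \<noteq> {}"
  shows "sc N (agpos1 al \<sigma>) (altpos1 al) A1 > 0" "sc N (agpos2 al \<sigma>) (altpos2 al) A1 > 0"
    "sc N (agpos1 al \<sigma>) (altpos1 al) A2 \<ge> 0" "sc N (agpos2 al \<sigma>) (altpos2 al) A2 \<ge> 0"
proof -
  have "\<And>i. posr1 al (\<sigma> i) > 0 \<and> posr2 al (\<sigma> i) > 0" using posr_pos[OF assms(1,2)] by blast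
  moreover have "\<And>i. posr1 al (\<sigma> i) \<noteq> 0" "\<And>i. posr2 al (\<sigma> i) \<noteq> 0" using calculation by (metis less_irrefl)+
  ultimately show "sc N (agpos1 al \<sigma>) (altpos1 al) A1 > 0" "sc N (agpos2 al \<sigma>) (altpos2 al) A1 > 0"
    "sc N (agpos1 al \<sigma>) (altpos1 al) A2 \<ge> 0" "sc N (agpos2 al \<sigma>) (altpos2 al) A2 \<ge> 0"
    unfolding sc1_eq using assms by (auto intro!: sum_pos sum_nonneg)
qed

lemma upper:
  fixes al :: real
  assumes "0<al" "al<1" "finite N" "N \<noteq> {}" "consistent al N \<sigma> q p"
  shows "ratio (sc N q p A1) (min (sc N q p A1) (sc N q p A2)) \<le>
    max (ratio (sc N (agpos1 al \<sigma>) (altpos1 al) A1) (sc N (agpos1 al \<sigma>) (altpos1 al) A2))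
     (max (ratio (sc N (agpos2 al \<sigma>) (altpos2 al) A1) (sc N (agpos2 al \<sigma>) (altpos2 al) A2))
          1)"
proof -
  define P11 where "P11 = sc N (agpos1 al \<sigma>) (altpos1 al) A1"
  define P12 where "P12 = sc N (agpos1 al \<sigma>) (altpos1 al) A2"
  define P21 where "P21 = sc N (agpos2 al \<sigma>) (altpos2 al) A1"
  define P22 where "P22 = sc N (agpos2 al \<sigma>) (altpos2 al) A2"
  have pp: "P11 > 0" "P21 > 0" "P12 \<ge> 0" "P22 \<ge> 0" unfolding P11_def P12_def P21_def P22_def
    using P_pos[OF assms(1-4)] by auto
  show ?thesis
  proof (cases "P12 = 0 \<or> P22 = 0")
    case True
    then show ?thesis using pp unfolding P11_def[symmetric] P12_def[symmetric] P21_def[symmetric] P22_def[symmetric]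
      by (auto simp: ratio_def)
  next
    case False
    then have pos: "P12 > 0" "P22 > 0" using pp by auto
    define la where "la = max (P11/P12) (max (P21/P22) 1)"
    have R: "max (ratio P11 P12) (max (ratio P21 P22) 1) = ereal la"
      unfolding la_def using pos by (simp add: ratio_def max_def)
    have la1: "1 \<le> la" unfolding la_def by simp
    have h1: "P11 \<le> la * P12"
    proof -
      have "P11/P12 \<le> la" unfolding la_def by simp
      then show ?thesis using pos by (simp add: pos_divide_le_eq mult.commute)
    qed
    have h2: "P21 \<le> la * P22"
    proof -
      have "P21/P22 \<le> la" unfolding la_def by simp
      then show ?thesis using pos by (simp add: pos_divide_le_eq mult.commute)
    qed
    have key: "sc N q p A1 \<le> la * sc N q p A2"
      by (rule upper_key[OF assms(1,2) la1 assms(5)]) (use h1 h2 in \<open>auto simp: P11_def P12_def P21_def P22_def\<close>)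
    have "ratio (sc N q p A1) (min (sc N q p A1) (sc N q p A2)) \<le> ereal la"
      by (rule ratio_le[OF _ _ la1 key]) (auto simp: sc_def edist_def intro: sum_nonneg)
    then show ?thesis unfolding P11_def[symmetric] P12_def[symmetric] P21_def[symmetric] P22_def[symmetric] R .
  qed
qed


lemma dist_ge: "consistent al N \<sigma> q p \<Longrightarrow>
  ratio (sc N q p A1) (min (sc N q p A1) (sc N q p A2)) \<le> distortion al N \<sigma> A1"
  unfolding distortion_def
  by (rule order_trans[OF _ SUP_upper[of "(q,p)"]]) auto

lemma ratio_ge: fixes x y :: real assumes "0 \<le> x" "0 \<le> y"
  shows "ereal (x/y) \<le> ratio x (min x y)"
  using assms by (auto simp: ratio_def min_def divide_le_eq_1)

lemma ratio_ge1: fixes x y :: real assumes "0 \<le> x" "0 \<le> y"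
  shows "1 \<le> ratio x (min x y)"
  using assms by (auto simp: ratio_def min_def)

lemma ratio_ge2: fixes x y :: real assumes "0 < x" "0 \<le> y"
  shows "ratio x y \<le> ratio x (min x y)"
  using assms by (auto simp: ratio_def min_def divide_le_eq_1)

lemma sc_nonneg: "finite N \<Longrightarrow> 0 \<le> sc N q p a"
  unfolding sc_def edist_def by (auto intro: sum_nonneg)

lemma lower_gen:
  fixes t :: "nat \<Rightarrow> real" and g :: "'i \<Rightarrow> real"
  assumes "finite N" "\<And>n. consistent al N \<sigma> (\<lambda>i. if \<sigma> i = (A2,Weak) then t n else g i) p"
    "t \<longlonglongrightarrow> t0" "\<And>i. \<sigma> i = (A2,Weak) \<Longrightarrow> g i = t0" "sc N g p A2 > 0"
  shows "ereal (sc N g p A1 / sc N g p A2) \<le> distortion al N \<sigma> A1"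
proof -
  define Q where "Q n = (\<lambda>i. if \<sigma> i = (A2,Weak) then t n else g i)" for n
  have lim: "(\<lambda>n. sc N (Q n) p a) \<longlonglongrightarrow> sc N g p a" for a
    unfolding sc_def edist_def
  proof (rule tendsto_sum)
    fix i assume "i \<in> N"
    show "(\<lambda>n. \<bar>Q n i - p a\<bar>) \<longlonglongrightarrow> \<bar>g i - p a\<bar>"
    proof (cases "\<sigma> i = (A2,Weak)")
      case True
      then show ?thesis unfolding Q_def using assms(3,4) by (auto intro!: tendsto_intros)
    next
      case False
      then show ?thesis unfolding Q_def by simp
    qed
  qed
  have L: "(\<lambda>n. ereal (sc N (Q n) p A1 / sc N (Q n) p A2)) \<longlonglongrightarrow> ereal (sc N g p A1 / sc N g p A2)"
    unfolding lim_ereal using lim assms(5) by (intro tendsto_divide) auto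
  have B: "ereal (sc N (Q n) p A1 / sc N (Q n) p A2) \<le> distortion al N \<sigma> A1" for n
  proof -
    have "ereal (sc N (Q n) p A1 / sc N (Q n) p A2) \<le> ratio (sc N (Q n) p A1) (min (sc N (Q n) p A1) (sc N (Q n) p A2))"
      using assms(1) by (intro ratio_ge sc_nonneg)
    also have "\<dots> \<le> distortion al N \<sigma> A1" using assms(2)[of n] unfolding Q_def by (intro dist_ge) auto
    finally show ?thesis .
  qed
  show ?thesis by (rule LIMSEQ_le_const2[OF L]) (use B in blast)
qed


lemma posr2_other: "r \<noteq> (A2,Weak) \<Longrightarrow> posr2 al r = posr1 al r"
  by (cases r; rename_tac y s; case_tac y; case_tac s; simp add: posr1_def posr2_def)

lemma cond_other: fixes al :: real assumes "0<al" "al<1" "r \<noteq> (A2,Weak)"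
  shows "cond al r \<bar>posr1 al r - 0\<bar> \<bar>posr1 al r - (2/al+2)\<bar>"
proof -
  have ia: "1/al > 1" "2/al = 2*(1/al)" using assms by simp_all
  have ab: "\<bar>1/al+1 - 0\<bar> = 1/al+1" "\<bar>1/al+1 - (2/al+2)\<bar> = 1/al+1"
    "\<bar>2 - 0\<bar> = (2::real)" "\<bar>2 - (2/al+2)\<bar> = 2/al"
    "\<bar>2/al+2 - 0\<bar> = 2/al+2" "\<bar>2/al+2 - (2/al+2)\<bar> = 0"
    using ia by (smt (verit))+
  have "al*(1/al+1) = 1+al" using assms by (simp add: distrib_left)
  then have k1: "al*(1/al+1) < 1/al+1" using assms ia by linarith
  have k2: "al*(2/al) = 2" using assms by simp
  have k3: "0 \<le> al*(2/al+2)" using assms ia by simp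
  obtain y s where r: "r = (y,s)" by fastforce
  show ?thesis using assms(3) unfolding r
    by (cases y; cases s; simp only: posr1_simps ab cond_def prod.case alt.case strength.case; use k1 k2 k3 in simp)
qed

lemma fam1_cons: fixes al t :: real assumes "0<al" "al<1" "1/al+1 \<le> t" "t < 2/al"
  shows "consistent al N \<sigma> (\<lambda>i. if \<sigma> i = (A2,Weak) then t else agpos1 al \<sigma> i) (altpos1 al)"
proof (rule cond_consistent)
  fix i assume "i \<in> N"
  show "cond al (\<sigma> i) (edist (\<lambda>i. if \<sigma> i = (A2,Weak) then t else agpos1 al \<sigma> i) (altpos1 al) i A1)
     (edist (\<lambda>i. if \<sigma> i = (A2,Weak) then t else agpos1 al \<sigma> i) (altpos1 al) i A2)"
  proof (cases "\<sigma> i = (A2,Weak)")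
    case True
    have ia: "1/al > 1" using assms by simp
    have at: "al*t < 2" using mult_strict_left_mono[OF assms(4) assms(1)] assms by simp
    have "\<bar>t - 0\<bar> = t" "\<bar>t - (2/al+2)\<bar> = 2/al+2-t" using ia assms by auto
    then show ?thesis using True at assms ia unfolding edist_def altpos_simps cond_def by auto
  next
    case False
    then show ?thesis using cond_other[OF assms(1,2) False] unfolding edist_def altpos_simps agpos1_eq by simp
  qed
qed

lemma fam2_cons: fixes al t :: real assumes "0<al" "al<1" "2/al + 2 + (2*al + 2) / (1 - al) < t"
  shows "consistent al N \<sigma> (\<lambda>i. if \<sigma> i = (A2,Weak) then t else agpos2 al \<sigma> i) (altpos2 al)"
proof (rule cond_consistent)
  fix i assume "i \<in> N"
  show "cond al (\<sigma> i) (edist (\<lambda>i. if \<sigma> i = (A2,Weak) then t else agpos2 al \<sigma> i) (altpos2 al) i A1)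
     (edist (\<lambda>i. if \<sigma> i = (A2,Weak) then t else agpos2 al \<sigma> i) (altpos2 al) i A2)"
  proof (cases "\<sigma> i = (A2,Weak)")
    case True
    have ia: "1/al > 1" using assms by simp
    have sp: "(2*al+2)/(1-al) > 0" using assms by (intro divide_pos_pos) auto
    have T: "(2/al + 2 + (2*al + 2) / (1 - al)) * (1-al) = 2/al+2" using assms by (simp add: field_simps)
    have "(2/al + 2 + (2*al + 2) / (1 - al)) * (1-al) < t * (1-al)"
      using assms by (intro mult_strict_right_mono) auto
    then have at: "2/al+2 < t*(1-al)" using T by simp
    have tp: "t > 2/al+2" using assms sp by linarith
    have "2/al > 0" using assms by simp
    then have "t > 0" using tp by linarith
    then have ab: "\<bar>t - 0\<bar> = t" "\<bar>t - (2/al+2)\<bar> = t - (2/al+2)" using tp by simp_all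
    have e: "(\<lambda>i. if \<sigma> i = (A2,Weak) then t else agpos2 al \<sigma> i) i = t" using True by simp
    have m: "t*(1-al) = t - al*t" by (simp add: algebra_simps)
    show ?thesis unfolding edist_def altpos_simps cond_def True
      by (simp only: prod.case alt.case strength.case simp_thms if_True ab) (use at m \<open>2/al > 0\<close> in linarith)
  next
    case False
    then show ?thesis using cond_other[OF assms(1,2) False] unfolding edist_def altpos_simps agpos2_eq posr2_other[OF False] by simp
  qed
qed


lemma lin_aux: fixes u c X :: real assumes "1 < u" "c = (u-1)/2"
  shows "X \<le> c \<longrightarrow> 0 < X \<longrightarrow> u+1 \<le> 2*u - X \<and> 2*u - X < 2*u"
proof (intro impI conjI)
  assume "X \<le> c" "0 < X"
  then show "u+1 \<le> 2*u - X" "2*u - X < 2*u" using assms by simp_all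
qed

lemma lower_cfg:
  fixes t :: "nat \<Rightarrow> real" and g :: "'i \<Rightarrow> real"
  assumes "finite N" "sc N g p A1 > 0"
    "\<And>n. consistent al N \<sigma> (\<lambda>i. if \<sigma> i = (A2,Weak) then t n else g i) p"
    "t \<longlonglongrightarrow> t0" "\<And>i. \<sigma> i = (A2,Weak) \<Longrightarrow> g i = t0" "t0 \<noteq> p A2"
  shows "ratio (sc N g p A1) (sc N g p A2) \<le> distortion al N \<sigma> A1"
proof (cases "\<exists>i\<in>N. \<sigma> i = (A2,Weak)")
  case True
  then obtain i where i: "i \<in> N" "\<sigma> i = (A2,Weak)" by blast
  have "0 < \<bar>g i - p A2\<bar>" using assms(5)[OF i(2)] assms(6) by simp
  also have "\<dots> \<le> sc N g p A2" unfolding sc_def edist_def using assms(1) i(1)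
    by (intro member_le_sum) auto
  finally have P: "sc N g p A2 > 0" .
  have "ratio (sc N g p A1) (sc N g p A2) = ereal (sc N g p A1 / sc N g p A2)" using P by (simp add: ratio_def)
  also have "\<dots> \<le> distortion al N \<sigma> A1" by (rule lower_gen[OF assms(1,3,4,5) P])
  finally show ?thesis .
next
  case False
  have eq: "sc N (\<lambda>i. if \<sigma> i = (A2,Weak) then t 0 else g i) p a = sc N g p a" for a
    unfolding sc_def edist_def using False by (intro sum.cong) auto
  have "ratio (sc N g p A1) (sc N g p A2) \<le> ratio (sc N g p A1) (min (sc N g p A1) (sc N g p A2))"
    using assms(2) by (intro ratio_ge2 sc_nonneg assms(1))
  also have "\<dots> \<le> distortion al N \<sigma> A1" using dist_ge[OF assms(3)[of 0]] unfolding eq .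
  finally show ?thesis .
qed

theorem lemma5:
  fixes \<alpha> :: real and N :: "'i set" and \<sigma> :: "'i \<Rightarrow> report"
  assumes "0 < \<alpha>" "\<alpha> < 1" "finite N" "N \<noteq> {}"
  shows "distortion \<alpha> N \<sigma> A1 =
    max (ratio (sc N (agpos1 \<alpha> \<sigma>) (altpos1 \<alpha>) A1) (sc N (agpos1 \<alpha> \<sigma>) (altpos1 \<alpha>) A2))
     (max (ratio (sc N (agpos2 \<alpha> \<sigma>) (altpos2 \<alpha>) A1) (sc N (agpos2 \<alpha> \<sigma>) (altpos2 \<alpha>) A2))
          1)"
proof (rule antisym)
  show "distortion \<alpha> N \<sigma> A1 \<le> max (ratio (sc N (agpos1 \<alpha> \<sigma>) (altpos1 \<alpha>) A1) (sc N (agpos1 \<alpha> \<sigma>) (altpos1 \<alpha>) A2))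
     (max (ratio (sc N (agpos2 \<alpha> \<sigma>) (altpos2 \<alpha>) A1) (sc N (agpos2 \<alpha> \<sigma>) (altpos2 \<alpha>) A2))
          1)"
    unfolding distortion_def
    by (rule SUP_least) (auto intro!: upper[OF assms])
next
  have ia: "1/\<alpha> > 1" using assms by simp
  define c where "c = (1/\<alpha> - 1)/2"
  have c0: "c > 0" unfolding c_def using ia by simp
  define t1 where "t1 n = 2/\<alpha> - c * inverse (real (Suc n))" for n
  define T where "T = 2/\<alpha> + 2 + (2*\<alpha>+2)/(1-\<alpha>)"
  define t2 where "t2 n = T + inverse (real (Suc n))" for n
  have t1_lim: "t1 \<longlonglongrightarrow> 2/\<alpha>" unfolding t1_def
    using tendsto_diff[OF tendsto_const tendsto_mult[OF tendsto_const LIMSEQ_inverse_real_of_nat], of "2/\<alpha>" c]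
    by simp
  have t2_lim: "t2 \<longlonglongrightarrow> T" unfolding t2_def by (rule LIMSEQ_inverse_real_of_nat_add)
  have t1_rng: "1/\<alpha>+1 \<le> t1 n \<and> t1 n < 2/\<alpha>" for n
  proof -
    have i0: "0 < inverse (real (Suc n))" "inverse (real (Suc n)) \<le> 1" by (auto simp: field_simps)
    have "c * inverse (real (Suc n)) \<le> c" using i0 c0 by (simp add: mult_left_le)
    moreover have "0 < c * inverse (real (Suc n))" using i0 c0 by simp
    moreover have "2/\<alpha> = 2*(1/\<alpha>)" by simp
    ultimately show ?thesis unfolding t1_def using lin_aux[OF ia c_def] by simp
  qed
  have t2_rng: "T < t2 n" for n unfolding t2_def by simp
  have g1: "\<sigma> i = (A2,Weak) \<Longrightarrow> agpos1 \<alpha> \<sigma> i = 2/\<alpha>" for i by (simp add: agpos1_def)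
  have g2: "\<sigma> i = (A2,Weak) \<Longrightarrow> agpos2 \<alpha> \<sigma> i = T" for i by (simp add: agpos2_def T_def)
  have sp: "(2*\<alpha>+2)/(1-\<alpha>) > 0" using assms by (intro divide_pos_pos) auto
  have ne1: "2/\<alpha> \<noteq> altpos1 \<alpha> A2" by (simp add: altpos_simps)
  have ne2: "T \<noteq> altpos2 \<alpha> A2" using sp assms by (simp add: altpos_simps T_def)
  have L1: "ratio (sc N (agpos1 \<alpha> \<sigma>) (altpos1 \<alpha>) A1) (sc N (agpos1 \<alpha> \<sigma>) (altpos1 \<alpha>) A2) \<le> distortion \<alpha> N \<sigma> A1"
    by (rule lower_cfg[OF assms(3) P_pos(1)[OF assms] fam1_cons[OF assms(1,2)] t1_lim g1 ne1])
       (use t1_rng in auto)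
  have L2: "ratio (sc N (agpos2 \<alpha> \<sigma>) (altpos2 \<alpha>) A1) (sc N (agpos2 \<alpha> \<sigma>) (altpos2 \<alpha>) A2) \<le> distortion \<alpha> N \<sigma> A1"
    by (rule lower_cfg[OF assms(3) P_pos(2)[OF assms] fam2_cons[OF assms(1,2)] t2_lim g2 ne2])
       (use t2_rng in \<open>auto simp: T_def\<close>)
  have L0: "1 \<le> distortion \<alpha> N \<sigma> A1"
    using t1_rng[of 0] by (intro order_trans[OF ratio_ge1 dist_ge[OF fam1_cons[OF assms(1,2)]]] sc_nonneg assms(3)) auto
  show "max (ratio (sc N (agpos1 \<alpha> \<sigma>) (altpos1 \<alpha>) A1) (sc N (agpos1 \<alpha> \<sigma>) (altpos1 \<alpha>) A2))
     (max (ratio (sc N (agpos2 \<alpha> \<sigma>) (altpos2 \<alpha>) A1) (sc N (agpos2 \<alpha> \<sigma>) (altpos2 \<alpha>) A2))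
          1) \<le> distortion \<alpha> N \<sigma> A1"
    using L0 L1 L2 by simp
qed

end
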